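(* (i) Let $A$ be a $3\times m$ matrix with entries in $\{0,1,-1\}$ and let $B\in\mathcal{Q}_0(A^t)$. Then $(AB)^{[2]}$ is a $P_0$-matrix, and no nonreal eigenvalue of $AB$ lies in the open left half-plane $\mathbb{C}_-$. (ii) Let $A$ be an $m\times 3$ matrix with entries in $\{0,1,-1\}$ and let $B\in\mathcal{Q}_0(A^t)$. Then no nonreal eigenvalue of $AB$ lies in $\mathbb{C}_-$.
   Context: For $M\in\mathbb{R}^{n\times m}$, $\mathcal{Q}(M)$ is the set of real matrices with the same entrywise sign pattern as $M$, and $\mathcal{Q}_0(M)$ its closure. A square real matrix is a $P_0$-matrix if all principal minors are nonnegative. $M^{[2]}$ denotes the second additive compound of a square matrix $M\in\mathbb{R}^{n\times n}$: the matrix of $u\wedge v\mapsto Mu\wedge v+u\wedge Mv$ on $\Lambda^2\mathbb{R}^n$ in the lexicographically ordered basis $e_i\wedge e_j$, $i<j$. *)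

theory Defs
  imports "HOL-Analysis.Analysis"
begin

definition sign_class :: "real^'n^'m \<Rightarrow> (real^'n^'m) set" where
  "sign_class M = {B. \<forall>i j. sgn (B$i$j) = sgn (M$i$j)}"

definition sign_class0 :: "real^'n^'m \<Rightarrow> (real^'n^'m) set" where
  "sign_class0 M = closure (sign_class M)"

definition principal_minor :: "real^'n^'n \<Rightarrow> 'n set \<Rightarrow> real" where
  "principal_minor M S =
     (\<Sum>p\<in>{p. p permutes S}. of_int (sign p) * (\<Prod>i\<in>S. M$i$(p i)))"

definition P0_matrix :: "real^'n^'n \<Rightarrow> bool" where
  "P0_matrix M \<longleftrightarrow> (\<forall>S. principal_minor M S \<ge> 0)"

text \<open>Lexicographically ordered basis of the second exterior power of R^3:
  e1^e2, e1^e3, e2^e3.\<close>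
definition wedge_idx :: "3 \<Rightarrow> 3 \<times> 3" where
  "wedge_idx a = (if a = 1 then (1,2) else if a = 2 then (1,3) else (2,3))"

text \<open>Second additive compound of a 3x3 matrix: entry (a,b) is the coefficient of
  basis element a in M e_k ^ e_l + e_k ^ M e_l, where b = e_k ^ e_l.\<close>
definition add_compound2 :: "real^3^3 \<Rightarrow> real^3^3" where
  "add_compound2 M = (\<chi> a b. (case wedge_idx a of (i,j) \<Rightarrow> case wedge_idx b of (k,l) \<Rightarrow>
      (if l = j then M$i$k else 0) - (if l = i then M$j$k else 0)
    + (if k = i then M$j$l else 0) - (if k = j then M$i$l else 0)))"

definition eigenvalue :: "real^'n^'n \<Rightarrow> complex \<Rightarrow> bool" where
  "eigenvalue M z \<longleftrightarrow>
     (\<exists>v::complex^'n. v \<noteq> 0 \<and> (\<chi> i j. complex_of_real (M$i$j)) *v v = z *s v)"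

end

theory Submission
  imports Defs
begin

lemma pm_det:
  fixes M :: "real^'n^'n"
  shows "principal_minor M S = det (\<chi> i j. if i\<in>S \<and> j\<in>S then M$i$j else if i = j then 1 else 0)"
proof -
  let ?X = "(\<chi> i j. if i\<in>S \<and> j\<in>S then M$i$j else if i = j then 1 else 0) :: real^'n^'n"
  have "det ?X = (\<Sum>p\<in>{p. p permutes UNIV}. of_int (sign p) * (\<Prod>i\<in>UNIV. ?X$i$(p i)))"
    by (rule det_def)
  also have "\<dots> = (\<Sum>p\<in>{p. p permutes S}. of_int (sign p) * (\<Prod>i\<in>UNIV. ?X$i$(p i)))"
  proof (rule sum.mono_neutral_right)
    show "finite {p. p permutes (UNIV::'n set)}" by (simp add: finite_permutations)
    show "{p. p permutes S} \<subseteq> {p. p permutes (UNIV::'n set)}" by (auto intro: permutes_subset)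
    show "\<forall>p\<in>{p. p permutes UNIV} - {p. p permutes S}. of_int (sign p) * (\<Prod>i\<in>UNIV. ?X$i$(p i)) = 0"
    proof
      fix p assume p: "p \<in> {p. p permutes UNIV} - {p. p permutes S}"
      then have "\<exists>x. x \<notin> S \<and> p x \<noteq> x"
        by (auto simp: permutes_def)
      then obtain x where x: "x \<notin> S" "p x \<noteq> x" by blast
      have "?X$x$(p x) = 0" using x by auto
      then have "(\<Prod>i\<in>UNIV. ?X$i$(p i)) = 0"
        by (meson UNIV_I finite prod_zero)
      then show "of_int (sign p) * (\<Prod>i\<in>UNIV. ?X$i$(p i)) = 0" by simp
    qed
  qed
  also have "\<dots> = principal_minor M S"
    unfolding principal_minor_def
  proof (rule sum.cong[OF refl])
    fix p assume "p \<in> {p. p permutes S}"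
    then have p: "p permutes S" by simp
    have "(\<Prod>i\<in>UNIV. ?X$i$(p i)) = (\<Prod>i\<in>UNIV - S. ?X$i$(p i)) * (\<Prod>i\<in>S. ?X$i$(p i))"
      by (rule prod.subset_diff[OF subset_UNIV finite])
    also have "(\<Prod>i\<in>UNIV - S. ?X$i$(p i)) = 1"
      by (rule prod.neutral) (use p in \<open>auto simp: permutes_not_in\<close>)
    also have "(\<Prod>i\<in>S. ?X$i$(p i)) = (\<Prod>i\<in>S. M$i$(p i))"
      by (rule prod.cong[OF refl]) (use p in \<open>auto simp: permutes_in_image\<close>)
    finally show "of_int (sign p) * (\<Prod>i\<in>UNIV. ?X$i$(p i)) = of_int (sign p) * (\<Prod>i\<in>S. M$i$(p i))"
      by simp
  qed
  finally show ?thesis by simp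
qed

lemma neq3: "(1::3) \<noteq> 2" "(1::3) \<noteq> 3" "(2::3) \<noteq> 3" "(2::3) \<noteq> 1" "(3::3) \<noteq> 1" "(3::3) \<noteq> 2"
  by simp_all

lemma comp_entries:
  fixes M :: "real^3^3"
  shows "add_compound2 M $1$1 = M$1$1 + M$2$2" "add_compound2 M $1$2 = M$2$3" "add_compound2 M $1$3 = - M$1$3"
        "add_compound2 M $2$1 = M$3$2" "add_compound2 M $2$2 = M$1$1 + M$3$3" "add_compound2 M $2$3 = M$1$2"
        "add_compound2 M $3$1 = - M$3$1" "add_compound2 M $3$2 = M$2$1" "add_compound2 M $3$3 = M$2$2 + M$3$3"
  by (simp_all add: add_compound2_def wedge_idx_def neq3)

lemma prod2_le:
  fixes x y a b :: real
  assumes "\<bar>x\<bar> \<le> a" "\<bar>y\<bar> \<le> b"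
  shows "x * y \<le> a * b"
proof -
  have "\<bar>x * y\<bar> \<le> a * b"
    unfolding abs_mult using assms by (intro mult_mono) auto
  then show ?thesis by linarith
qed

lemma prod3_le:
  fixes x y z a b c :: real
  assumes "\<bar>x\<bar> \<le> a" "\<bar>y\<bar> \<le> b" "\<bar>z\<bar> \<le> c"
  shows "x * y * z \<le> a * b * c"
proof -
  have "\<bar>x * y\<bar> \<le> a * b"
    unfolding abs_mult using assms by (intro mult_mono) auto
  then have "\<bar>x * y * z\<bar> \<le> (a * b) * c"
    unfolding abs_mult[of "x*y"] using assms by (intro mult_mono) auto
  then show ?thesis by linarith
qed

lemma poly_ineqs:
  fixes m11 m12 m13 m21 m22 m23 m31 m32 m33 :: real
  assumes "\<bar>m21\<bar> \<le> m11" "\<bar>m31\<bar> \<le> m11" "\<bar>m12\<bar> \<le> m22" "\<bar>m32\<bar> \<le> m22"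
          "\<bar>m13\<bar> \<le> m33" "\<bar>m23\<bar> \<le> m33"
  shows "0 \<le> m11" "0 \<le> m22" "0 \<le> m33"
    "m23 * m32 \<le> (m11 + m22) * (m11 + m33)"
    "m13 * m31 \<le> (m11 + m22) * (m22 + m33)"
    "m12 * m21 \<le> (m11 + m33) * (m22 + m33)"
    "m13 * (m11 + m33) * m31
        \<le> (m11 + m22) * (m11 + m33) * (m22 + m33) - m23 * m12 * m31 - m13 * m32 * m21
         - (m11 + m22) * m12 * m21 - m23 * m32 * (m22 + m33)"
proof -
  show n1: "0 \<le> m11" "0 \<le> m22" "0 \<le> m33" using assms by linarith+
  have p12: "m12 * m21 \<le> m22 * m11" by (rule prod2_le) (use assms in auto)
  have p13: "m13 * m31 \<le> m33 * m11" by (rule prod2_le) (use assms in auto)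
  have p23: "m23 * m32 \<le> m33 * m22" by (rule prod2_le) (use assms in auto)
  have t1: "m12 * m23 * m31 \<le> m22 * m33 * m11" by (rule prod3_le) (use assms in auto)
  have t2: "m13 * m21 * m32 \<le> m33 * m11 * m22" by (rule prod3_le) (use assms in auto)
  have q: "0 \<le> m11 * m11" "0 \<le> m11 * m22" "0 \<le> m11 * m33" "0 \<le> m22 * m22" "0 \<le> m22 * m33" "0 \<le> m33 * m33"
    using n1 by auto
  have "(m11 + m22) * (m11 + m33) = m11 * m11 + m11 * m33 + m11 * m22 + m33 * m22" by (simp add: algebra_simps)
  then show "m23 * m32 \<le> (m11 + m22) * (m11 + m33)" using p23 q by linarith
  have "(m11 + m22) * (m22 + m33) = m11 * m22 + m33 * m11 + m22 * m22 + m22 * m33" by (simp add: algebra_simps)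
  then show "m13 * m31 \<le> (m11 + m22) * (m22 + m33)" using p13 q by linarith
  have "(m11 + m33) * (m22 + m33) = m22 * m11 + m11 * m33 + m22 * m33 + m33 * m33" by (simp add: algebra_simps)
  then show "m12 * m21 \<le> (m11 + m33) * (m22 + m33)" using p12 q by linarith
  have r1: "0 \<le> (m11+m22) * (m11*m22 - m12*m21)" using n1 p12 by (intro mult_nonneg_nonneg) (auto simp: algebra_simps)
  have r2: "0 \<le> (m11+m33) * (m11*m33 - m13*m31)" using n1 p13 by (intro mult_nonneg_nonneg) (auto simp: algebra_simps)
  have r3: "0 \<le> (m22+m33) * (m22*m33 - m23*m32)" using n1 p23 by (intro mult_nonneg_nonneg) (auto simp: algebra_simps)
  have r4: "0 \<le> m11*m22*m33" using n1 by auto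
  have id: "(m11 + m22) * (m11 + m33) * (m22 + m33) - m23 * m12 * m31 - m13 * m32 * m21
         - (m11 + m22) * m12 * m21 - m23 * m32 * (m22 + m33) - m13 * (m11 + m33) * m31
        = (m11+m22) * (m11*m22 - m12*m21) + (m11+m33) * (m11*m33 - m13*m31)
          + (m22+m33) * (m22*m33 - m23*m32) + 2 * (m11*m22*m33) - m12 * m23 * m31 - m13 * m21 * m32"
    by (simp add: algebra_simps)
  have "m12 * m23 * m31 + m13 * m21 * m32 \<le> 2 * (m11*m22*m33)"
    using t1 t2 by (simp add: algebra_simps)
  then show "m13 * (m11 + m33) * m31
        \<le> (m11 + m22) * (m11 + m33) * (m22 + m33) - m23 * m12 * m31 - m13 * m32 * m21
         - (m11 + m22) * m12 * m21 - m23 * m32 * (m22 + m33)"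
    using id r1 r2 r3 by linarith
qed

lemma compound_P0:
  fixes M :: "real^3^3"
  assumes dom: "\<forall>i k. i \<noteq> k \<longrightarrow> \<bar>M$i$k\<bar> \<le> M$k$k"
  shows "P0_matrix (add_compound2 M)"
  unfolding P0_matrix_def
proof
  fix S :: "3 set"
  have a: "\<bar>M$2$1\<bar> \<le> M$1$1" "\<bar>M$3$1\<bar> \<le> M$1$1" "\<bar>M$1$2\<bar> \<le> M$2$2" "\<bar>M$3$2\<bar> \<le> M$2$2"
          "\<bar>M$1$3\<bar> \<le> M$3$3" "\<bar>M$2$3\<bar> \<le> M$3$3"
    using dom neq3 by auto
  note pi = poly_ineqs[OF a]
  show "principal_minor (add_compound2 M) S \<ge> 0"
    unfolding pm_det det_3
    apply (cases "1 \<in> S"; cases "2 \<in> S"; cases "3 \<in> S")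
    apply (simp_all add: comp_entries neq3)
    using pi by linarith+
qed

lemma det_char:
  fixes M :: "real^3^3" and a b :: real
  defines "X \<equiv> (\<chi> i j. complex_of_real (M$i$j) - (if i = j then Complex a b else 0)) :: complex^3^3"
  defines "n11 \<equiv> M$1$1 - a" and "n22 \<equiv> M$2$2 - a" and "n33 \<equiv> M$3$3 - a"
  defines "e1 \<equiv> n11 + n22 + n33"
      and "e2 \<equiv> n11*n22 - M$1$2*M$2$1 + n11*n33 - M$1$3*M$3$1 + n22*n33 - M$2$3*M$3$2"
      and "e3 \<equiv> n11*n22*n33 + M$1$2*M$2$3*M$3$1 + M$1$3*M$2$1*M$3$2 - n11*M$2$3*M$3$2 - M$1$2*M$2$1*n33 - M$1$3*n22*M$3$1"
  shows "Re (det X) = e3 - e1 * b^2" "Im (det X) = b^3 - e2 * b"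
  unfolding X_def det_3 e1_def e2_def e3_def n11_def n22_def n33_def
  by (simp_all add: neq3 algebra_simps power2_eq_square power3_eq_cube)

lemma P0_no_eig:
  fixes M :: "real^3^3" and z :: complex
  assumes P0: "P0_matrix (add_compound2 M)"
    and d: "det ((\<chi> i j. complex_of_real (M$i$j) - (if i = j then z else 0)) :: complex^3^3) = 0"
    and im: "Im z \<noteq> 0"
  shows "\<not> Re z < 0"
proof
  assume re: "Re z < 0"
  define a where "a = Re z"
  define b where "b = Im z"
  have z: "z = Complex a b" by (simp add: a_def b_def)
  define n11 where "n11 = M$1$1 - a"
  define n22 where "n22 = M$2$2 - a"
  define n33 where "n33 = M$3$3 - a"
  define e1 where "e1 = n11 + n22 + n33"
  define e2 where "e2 = n11*n22 - M$1$2*M$2$1 + n11*n33 - M$1$3*M$3$1 + n22*n33 - M$2$3*M$3$2"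
  define e3 where "e3 = n11*n22*n33 + M$1$2*M$2$3*M$3$1 + M$1$3*M$2$1*M$3$2 - n11*M$2$3*M$3$2 - M$1$2*M$2$1*n33 - M$1$3*n22*M$3$1"
  have r: "e3 - e1 * b^2 = 0" "b^3 - e2 * b = 0"
    using det_char[of M a b] d unfolding z e1_def e2_def e3_def n11_def n22_def n33_def by simp_all
  have b0: "b \<noteq> 0" using im b_def by simp
  have "b * (b^2 - e2) = 0" using r(2) by (simp add: algebra_simps power3_eq_cube power2_eq_square)
  then have "e2 = b^2" using b0 by simp
  then have E: "e1 * e2 - e3 = 0" using r(1) by simp
  define t where "t = - 2 * a"
  have t: "t > 0" using re a_def t_def by simp
  define d1 where "d1 = M$1$1 + M$2$2"
  define d2 where "d2 = M$1$1 + M$3$3"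
  define d3 where "d3 = M$2$2 + M$3$3"
  define mi where "mi = (d1*d2 - M$2$3*M$3$2) + (d1*d3 - M$1$3*M$3$1) + (d2*d3 - M$1$2*M$2$1)"
  define dC where "dC = d1*d2*d3 + M$2$3*M$1$2*(-M$3$1) + (-M$1$3)*M$3$2*M$2$1 - d1*M$1$2*M$2$1 - M$2$3*M$3$2*d3 - (-M$1$3)*d2*(-M$3$1)"
  have id: "e1 * e2 - e3 = t*t*t + t*t*(d1+d2+d3) + t*mi + dC"
    unfolding e1_def e2_def e3_def n11_def n22_def n33_def t_def d1_def d2_def d3_def mi_def dC_def
    by (simp add: algebra_simps)
  have pm: "\<And>S. principal_minor (add_compound2 M) S \<ge> 0" using P0 unfolding P0_matrix_def by blast
  have s1: "d1 \<ge> 0" "d2 \<ge> 0" "d3 \<ge> 0"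
    using pm[of "{1}"] pm[of "{2}"] pm[of "{3}"]
    unfolding pm_det det_3 by (simp_all add: comp_entries neq3 d1_def d2_def d3_def)
  have s2: "mi \<ge> 0"
    using pm[of "{1,2}"] pm[of "{1,3}"] pm[of "{2,3}"]
    unfolding pm_det det_3 mi_def by (simp_all add: comp_entries neq3 d1_def d2_def d3_def algebra_simps)
  have s3: "dC \<ge> 0"
    using pm[of "{1,2,3}"]
    unfolding pm_det det_3 dC_def by (simp_all add: comp_entries neq3 d1_def d2_def d3_def algebra_simps)
  have "t*t*t > 0" using t by simp
  moreover have "t*t*(d1+d2+d3) \<ge> 0" using s1 t by simp
  moreover have "t*mi \<ge> 0" using s2 t by simp
  ultimately show False using E id s3 by linarith
qed

definition cpx :: "real^'n^'m \<Rightarrow> complex^'n^'m" where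
  "cpx M = (\<chi> i j. complex_of_real (M$i$j))"

definition cX :: "real^'n^'n \<Rightarrow> complex \<Rightarrow> complex^'n^'n" where
  "cX M z = (\<chi> i j. complex_of_real (M$i$j) - (if i = j then z else 0))"

lemma cpx_mult: "cpx (A ** B) = cpx A ** cpx B"
  by (simp add: cpx_def vec_eq_iff matrix_matrix_mult_def)

lemma cX_transpose: "cX (transpose M) z = transpose (cX M z)"
  by (simp add: cX_def transpose_def vec_eq_iff eq_commute)

lemma eig_det:
  fixes M :: "real^'n^'n"
  assumes v: "v \<noteq> 0" and e: "cpx M *v v = z *s v"
  shows "det (cX M z) = 0"
proof (rule ccontr)
  assume "det (cX M z) \<noteq> 0"
  then have "invertible (cX M z)" by (simp add: invertible_det_nz)
  then obtain Y where Y: "Y ** cX M z = mat 1" unfolding invertible_left_inverse by blast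
  have "cX M z *v v = cpx M *v v - z *s v"
  proof -
    have "(\<Sum>j\<in>UNIV. (if i = j then z else 0) * v$j) = z * v$i" for i
    proof -
      have "(\<Sum>j\<in>UNIV. (if i = j then z else 0) * v$j) = (\<Sum>j\<in>UNIV. if i = j then z * v$i else 0)"
        by (rule sum.cong) auto
      then show ?thesis by simp
    qed
    then show ?thesis
      by (simp add: vec_eq_iff cX_def cpx_def matrix_vector_mult_def left_diff_distrib sum_subtractf)
  qed
  then have "cX M z *v v = 0" using e by simp
  then have "Y *v (cX M z *v v) = 0" by simp
  then have "v = 0" unfolding matrix_vector_mul_assoc Y by simp
  then show False using v by simp
qed

lemma eigenvalue_det:
  fixes M :: "real^'n^'n"
  assumes "eigenvalue M z" shows "det (cX M z) = 0"
  using assms unfolding eigenvalue_def by (metis cpx_def eig_det)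

lemma sign_class0_prop:
  fixes T :: "real^'n^'m"
  assumes "B \<in> sign_class0 T"
  shows "T$j$k * B$j$k \<ge> 0 \<and> (T$j$k = 0 \<longrightarrow> B$j$k = 0)"
proof -
  let ?K = "{B::real^'n^'m. T$j$k * B$j$k \<ge> 0} \<inter> (if T$j$k = 0 then {B. B$j$k = 0} else UNIV)"
  have cl: "closed ?K"
    by (intro closed_Int) (auto intro!: closed_Collect_le closed_Collect_eq continuous_intros)
  have "sign_class T \<subseteq> ?K"
  proof
    fix C assume "C \<in> sign_class T"
    then have "sgn (C$j$k) = sgn (T$j$k)" unfolding sign_class_def by blast
    then show "C \<in> ?K"
      by (auto simp: sgn_if zero_le_mult_iff split: if_splits)
  qed
  then have "sign_class0 T \<subseteq> ?K"
    unfolding sign_class0_def using cl by (rule closure_minimal)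
  then show ?thesis using assms by (auto split: if_splits)
qed

lemma dominance:
  fixes A :: "real^'m^3" and B :: "real^3^'m"
  assumes A: "\<forall>i j. A$i$j \<in> {0, 1, -1}"
    and B: "\<forall>j k. A$k$j * B$j$k \<ge> 0 \<and> (A$k$j = 0 \<longrightarrow> B$j$k = 0)"
  shows "\<forall>i k. i \<noteq> k \<longrightarrow> \<bar>(A ** B)$i$k\<bar> \<le> (A ** B)$k$k"
proof (intro allI impI)
  fix i k :: 3
  have tm: "\<bar>A$i$j * B$j$k\<bar> \<le> A$k$j * B$j$k" for j
  proof -
    have "A$i$j \<in> {0, 1, -1}" "A$k$j \<in> {0, 1, -1}" using A by auto
    moreover have "A$k$j * B$j$k \<ge> 0" "A$k$j = 0 \<longrightarrow> B$j$k = 0" using B by auto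
    ultimately show ?thesis by (auto simp: abs_if)
  qed
  have "\<bar>(A ** B)$i$k\<bar> = \<bar>\<Sum>j\<in>UNIV. A$i$j * B$j$k\<bar>" by (simp add: matrix_matrix_mult_def)
  also have "\<dots> \<le> (\<Sum>j\<in>UNIV. \<bar>A$i$j * B$j$k\<bar>)" by (rule sum_abs)
  also have "\<dots> \<le> (\<Sum>j\<in>UNIV. A$k$j * B$j$k)" by (rule sum_mono) (rule tm)
  also have "\<dots> = (A ** B)$k$k" by (simp add: matrix_matrix_mult_def)
  finally show "\<bar>(A ** B)$i$k\<bar> \<le> (A ** B)$k$k" .
qed

lemma part_i:
  fixes A :: "real^'m^3" and B :: "real^3^'m"
  assumes A: "\<forall>i j. A$i$j \<in> {0, 1, -1}"
    and B: "\<forall>j k. A$k$j * B$j$k \<ge> 0 \<and> (A$k$j = 0 \<longrightarrow> B$j$k = 0)"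
  shows "P0_matrix (add_compound2 (A ** B))"
    "\<And>z. det (cX (A ** B) z) = 0 \<Longrightarrow> Im z \<noteq> 0 \<Longrightarrow> \<not> Re z < 0"
proof -
  show P: "P0_matrix (add_compound2 (A ** B))"
    by (rule compound_P0[OF dominance[OF A B]])
  fix z assume "det (cX (A ** B) z) = 0" "Im z \<noteq> 0"
  then show "\<not> Re z < 0" using P0_no_eig[OF P] unfolding cX_def by blast
qed

theorem proposition4p1:
  fixes A :: "real^'m^3" and B :: "real^3^'m"
    and A' :: "real^3^'k" and B' :: "real^'k^3"
  shows "((\<forall>i j. A$i$j \<in> {0, 1, -1}) \<and> B \<in> sign_class0 (transpose A) \<longrightarrow>
            P0_matrix (add_compound2 (A ** B)) \<and>
            (\<forall>z. eigenvalue (A ** B) z \<and> Im z \<noteq> 0 \<longrightarrow> \<not> Re z < 0))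
       \<and> ((\<forall>i j. A'$i$j \<in> {0, 1, -1}) \<and> B' \<in> sign_class0 (transpose A') \<longrightarrow>
            (\<forall>z. eigenvalue (A' ** B') z \<and> Im z \<noteq> 0 \<longrightarrow> \<not> Re z < 0))"
proof (intro conjI impI allI)
  assume h: "(\<forall>i j. A$i$j \<in> {0, 1, -1}) \<and> B \<in> sign_class0 (transpose A)"
  have A: "\<forall>i j. A$i$j \<in> {0, 1, -1}" using h by blast
  have B: "\<forall>j k. A$k$j * B$j$k \<ge> 0 \<and> (A$k$j = 0 \<longrightarrow> B$j$k = 0)"
    using sign_class0_prop[of B "transpose A"] h by (simp add: transpose_def)
  show "P0_matrix (add_compound2 (A ** B))" by (rule part_i(1)[OF A B])
  fix z assume "eigenvalue (A ** B) z \<and> Im z \<noteq> 0"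
  then show "\<not> Re z < 0" using part_i(2)[OF A B] eigenvalue_det by blast
next
  fix z
  assume h: "(\<forall>i j. A'$i$j \<in> {0, 1, -1}) \<and> B' \<in> sign_class0 (transpose A')"
     and ez: "eigenvalue (A' ** B') z \<and> Im z \<noteq> 0"
  have A: "\<forall>i j. transpose A'$i$j \<in> {0, 1, -1}" using h by (simp add: transpose_def)
  have B: "\<forall>j k. transpose A'$k$j * transpose B'$j$k \<ge> 0 \<and> (transpose A'$k$j = 0 \<longrightarrow> transpose B'$j$k = 0)"
    using sign_class0_prop[of B' "transpose A'"] h by (simp add: transpose_def)
  obtain v where v: "v \<noteq> 0" "cpx (A' ** B') *v v = z *s v"
    using ez unfolding eigenvalue_def cpx_def by blast
  have z0: "z \<noteq> 0" using ez by auto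
  define w where "w = cpx B' *v v"
  have Aw: "cpx A' *v w = z *s v"
    using v(2) unfolding w_def cpx_mult matrix_vector_mul_assoc .
  have w0: "w \<noteq> 0"
  proof
    assume "w = 0"
    then have "z *s v = 0" using Aw by simp
    then show False using z0 v(1) by (simp add: vec_eq_iff)
  qed
  have "cpx (B' ** A') *v w = cpx B' *v (cpx A' *v w)" by (simp add: cpx_mult matrix_vector_mul_assoc)
  also have "\<dots> = cpx B' *v (z *s v)" using Aw by simp
  also have "\<dots> = z *s w" unfolding w_def by (rule vector_scalar_commute)
  finally have "cpx (B' ** A') *v w = z *s w" .
  then have "det (cX (B' ** A') z) = 0" using w0 eig_det by blast
  then have "det (cX (transpose A' ** transpose B') z) = 0"
    by (simp add: matrix_transpose_mul[symmetric] cX_transpose)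
  then show "\<not> Re z < 0" using part_i(2)[OF A B] ez by blast
qed

end
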